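(* Let $G=(V,E)$ be a graph and $k$ a nonnegative integer. Then $G$ has a dominating set of size $k$ if and only if it is possible to turn $G$ into a constellation (with vertex set $V$) by deleting $|E|-|V|+k$ edges.
   Context: All graphs are finite, simple and undirected. A dominating set of $G$ is a set $D\subseteq V$ such that every vertex of $V\setminus D$ is adjacent to some vertex of $D$. A star is a complete bipartite graph $K_{1,n}$ for some $n\ge 0$ (so a single vertex is a star). A constellation is a forest in which every connected component is a star. *)

theory Defs
  imports Main
begin

definition simple_graph :: "'a set \<Rightarrow> 'a set set \<Rightarrow> bool" where
  "simple_graph V E \<longleftrightarrow> finite V \<and> (\<forall>e\<in>E. \<exists>u v. u \<in> V \<and> v \<in> V \<and> u \<noteq> v \<and> e = {u, v})"

definition dominating_set :: "'a set \<Rightarrow> 'a set set \<Rightarrow> 'a set \<Rightarrow> bool" where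
  "dominating_set V E D \<longleftrightarrow> D \<subseteq> V \<and> (\<forall>v \<in> V - D. \<exists>d \<in> D. {v, d} \<in> E)"

definition adj_rel :: "'a set set \<Rightarrow> ('a \<times> 'a) set" where
  "adj_rel E = {(x, y). {x, y} \<in> E}"

definition component :: "'a set \<Rightarrow> 'a set set \<Rightarrow> 'a \<Rightarrow> 'a set" where
  "component V E v = {u \<in> V. (v, u) \<in> (adj_rel E)\<^sup>*}"

definition components :: "'a set \<Rightarrow> 'a set set \<Rightarrow> 'a set set" where
  "components V E = component V E ` V"

definition induced_edges :: "'a set set \<Rightarrow> 'a set \<Rightarrow> 'a set set" where
  "induced_edges E C = {e \<in> E. e \<subseteq> C}"

definition is_star :: "'a set \<Rightarrow> 'a set set \<Rightarrow> bool" where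
  "is_star C F \<longleftrightarrow> (\<exists>c \<in> C. F = {{c, v} | v. v \<in> C \<and> v \<noteq> c})"

text \<open>Forest: no cycles, expressed as: every component C spans exactly |C| - 1 edges
  (a connected graph is a tree iff it has one edge fewer than vertices).\<close>
definition forest :: "'a set \<Rightarrow> 'a set set \<Rightarrow> bool" where
  "forest V E \<longleftrightarrow> (\<forall>C \<in> components V E. card (induced_edges E C) + 1 = card C)"

definition constellation :: "'a set \<Rightarrow> 'a set set \<Rightarrow> bool" where
  "constellation V E \<longleftrightarrow> forest V E \<and>
     (\<forall>C \<in> components V E. is_star C (induced_edges E C))"

end

theory Submission
  imports Defs
begin

lemma adj_rtr_sym: "(x,y) \<in> (adj_rel E)\<^sup>* \<Longrightarrow> (y,x) \<in> (adj_rel E)\<^sup>*"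
proof -
  have "sym (adj_rel E)" unfolding sym_def adj_rel_def by (auto simp: insert_commute)
  hence "sym ((adj_rel E)\<^sup>*)" by (rule sym_rtrancl)
  thus "(x,y) \<in> (adj_rel E)\<^sup>* \<Longrightarrow> (y,x) \<in> (adj_rel E)\<^sup>*" by (auto simp: sym_def)
qed

lemma comp_self: "v \<in> V \<Longrightarrow> v \<in> component V E v"
  by (simp add: component_def)

lemma comp_sub: "component V E v \<subseteq> V"
  by (auto simp: component_def)

lemma comp_eq: "u \<in> component V E v \<Longrightarrow> v \<in> V \<Longrightarrow> component V E u = component V E v"
proof -
  assume u: "u \<in> component V E v" and v: "v \<in> V"
  hence vu: "(v,u) \<in> (adj_rel E)\<^sup>*" by (simp add: component_def)
  hence uv: "(u,v) \<in> (adj_rel E)\<^sup>*" by (rule adj_rtr_sym)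
  show ?thesis unfolding component_def
  proof (intro equalityI subsetI)
    fix w assume "w \<in> {w \<in> V. (u, w) \<in> (adj_rel E)\<^sup>*}"
    thus "w \<in> {w \<in> V. (v, w) \<in> (adj_rel E)\<^sup>*}" using vu rtrancl_trans by fastforce
  next
    fix w assume "w \<in> {w \<in> V. (v, w) \<in> (adj_rel E)\<^sup>*}"
    thus "w \<in> {w \<in> V. (u, w) \<in> (adj_rel E)\<^sup>*}" using uv rtrancl_trans by fastforce
  qed
qed

lemma comp_edge: "{u,w} \<in> E \<Longrightarrow> w \<in> V \<Longrightarrow> w \<in> component V E u"
  unfolding component_def adj_rel_def by auto

lemma card_star: "finite C \<Longrightarrow> c \<in> C \<Longrightarrow> card {{c,v} | v. v \<in> C \<and> v \<noteq> c} + 1 = card C"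
proof -
  assume f: "finite C" and c: "c \<in> C"
  have eq: "{{c,v} | v. v \<in> C \<and> v \<noteq> c} = (\<lambda>v. {c,v}) ` (C - {c})" by auto
  have "inj_on (\<lambda>v. {c,v}) (C - {c})" by (auto simp: inj_on_def doubleton_eq_iff)
  hence "card {{c,v} | v. v \<in> C \<and> v \<noteq> c} = card (C - {c})" using eq card_image by metis
  also have "\<dots> = card C - 1" using c f by simp
  finally have "card {{c,v} | v. v \<in> C \<and> v \<noteq> c} = card C - 1" .
  moreover have "card C > 0" using c f card_gt_0_iff by blast
  ultimately show ?thesis by simp
qed

theorem mainTheorem5:
  fixes V :: "'a set" and E :: "'a set set" and k :: nat
  assumes "simple_graph V E"
  shows "(\<exists>D. dominating_set V E D \<and> card D = k) \<longleftrightarrow>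
         (\<exists>F \<subseteq> E. int (card F) = int (card E) - int (card V) + int k
                  \<and> constellation V (E - F))"
proof -
  have finV: "finite V" and edges: "\<And>e. e \<in> E \<Longrightarrow> \<exists>u v. u \<in> V \<and> v \<in> V \<and> u \<noteq> v \<and> e = {u, v}"
    using assms by (auto simp: simple_graph_def)
  have "E \<subseteq> Pow V" using edges by blast
  hence finE: "finite E" using finV by (meson finite_Pow_iff finite_subset)
  show ?thesis
  proof
    assume "\<exists>D. dominating_set V E D \<and> card D = k"
    then obtain D where dD: "dominating_set V E D" and cD: "card D = k" by blast
    have DV: "D \<subseteq> V" using dD by (simp add: dominating_set_def)
    define dom where "dom v = (SOME d. d \<in> D \<and> {v,d} \<in> E)" for v
    have domp: "dom v \<in> D \<and> {v, dom v} \<in> E" if "v \<in> V - D" for v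
    proof -
      have "\<exists>d. d \<in> D \<and> {v,d} \<in> E" using dD that by (auto simp: dominating_set_def)
      thus ?thesis unfolding dom_def by (rule someI_ex)
    qed
    define E' where "E' = (\<lambda>v. {dom v, v}) ` (V - D)"
    have E'E: "E' \<subseteq> E" unfolding E'_def using domp by (auto simp: insert_commute)
    have inj: "inj_on (\<lambda>v. {dom v, v}) (V - D)"
    proof (rule inj_onI)
      fix a b assume a: "a \<in> V - D" and b: "b \<in> V - D" and e: "{dom a, a} = {dom b, b}"
      show "a = b" using e domp[OF a] domp[OF b] a b by (auto simp: doubleton_eq_iff)
    qed
    have cE': "card E' = card (V - D)" unfolding E'_def using inj by (simp add: card_image)
    also have "\<dots> = card V - card D" using DV finV by (simp add: card_Diff_subset finite_subset)
    finally have cE'2: "card E' = card V - card D" .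
    have cDV: "card D \<le> card V" using DV finV by (simp add: card_mono)
    define F where "F = E - E'"
    have EF: "E - F = E'" unfolding F_def using E'E by auto
    have cF: "card F = card E - card E'" unfolding F_def using E'E finE by (simp add: card_Diff_subset finite_subset)
    have cE'le: "card E' \<le> card E" using E'E finE by (simp add: card_mono)
    define r where "r x = (if x \<in> D then x else dom x)" for x
    have redge: "r z = r y" if "(y,z) \<in> adj_rel E'" for y z
    proof -
      from that obtain u where u: "u \<in> V - D" and e: "{y,z} = {dom u, u}"
        by (auto simp: adj_rel_def E'_def)
      have "dom u \<in> D" using domp[OF u] by simp
      thus ?thesis using e u by (auto simp: doubleton_eq_iff r_def)
    qed
    have rstep: "(x, r x) \<in> (adj_rel E')\<^sup>*" if "x \<in> V" for x
    proof (cases "x \<in> D")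
      case True thus ?thesis by (simp add: r_def)
    next
      case False
      hence "{x, dom x} \<in> E'" using that unfolding E'_def by (auto simp: insert_commute)
      hence "(x, dom x) \<in> adj_rel E'" by (simp add: adj_rel_def)
      thus ?thesis using False by (simp add: r_def)
    qed
    have rV: "r x \<in> V" if "x \<in> V" for x using that domp DV by (auto simp: r_def)
    have rr: "r (r x) = r x" if "x \<in> V" for x using that domp by (auto simp: r_def)
    have compc: "component V E' x = {u \<in> V. r u = r x}" if x: "x \<in> V" for x
    proof
      show "component V E' x \<subseteq> {u \<in> V. r u = r x}"
      proof
        fix u assume "u \<in> component V E' x"
        hence uV: "u \<in> V" and p: "(x,u) \<in> (adj_rel E')\<^sup>*" by (auto simp: component_def)
        from p have "r u = r x" by (induction rule: rtrancl_induct) (auto dest: redge)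
        thus "u \<in> {u \<in> V. r u = r x}" using uV by simp
      qed
    next
      show "{u \<in> V. r u = r x} \<subseteq> component V E' x"
      proof
        fix u assume "u \<in> {u \<in> V. r u = r x}"
        hence uV: "u \<in> V" and ru: "r u = r x" by auto
        have "(r u, u) \<in> (adj_rel E')\<^sup>*" using rstep[OF uV] by (rule adj_rtr_sym)
        hence "(x, u) \<in> (adj_rel E')\<^sup>*" using rstep[OF x] ru by (metis rtrancl_trans)
        thus "u \<in> component V E' x" using uV by (simp add: component_def)
      qed
    qed
    have star: "r x \<in> component V E' x \<and>
      induced_edges E' (component V E' x) = {{r x, v} | v. v \<in> component V E' x \<and> v \<noteq> r x}"
      if x: "x \<in> V" for x
    proof
      show "r x \<in> component V E' x" using compc[OF x] rV[OF x] rr[OF x] by simp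
      show "induced_edges E' (component V E' x) = {{r x, v} | v. v \<in> component V E' x \<and> v \<noteq> r x}"
      proof
        show "induced_edges E' (component V E' x) \<subseteq> {{r x, v} | v. v \<in> component V E' x \<and> v \<noteq> r x}"
        proof
          fix e assume "e \<in> induced_edges E' (component V E' x)"
          then obtain u where u: "u \<in> V - D" and e: "e = {dom u, u}" and sub: "e \<subseteq> component V E' x"
            by (auto simp: induced_edges_def E'_def)
          have "u \<in> component V E' x" using e sub by auto
          hence "r u = r x" using compc[OF x] by auto
          hence "dom u = r x" using u by (simp add: r_def)
          moreover have "u \<noteq> dom u" using domp[OF u] u by auto
          ultimately show "e \<in> {{r x, v} | v. v \<in> component V E' x \<and> v \<noteq> r x}"
            using e \<open>u \<in> component V E' x\<close> by auto
        qed
      next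
        show "{{r x, v} | v. v \<in> component V E' x \<and> v \<noteq> r x} \<subseteq> induced_edges E' (component V E' x)"
        proof
          fix e assume "e \<in> {{r x, v} | v. v \<in> component V E' x \<and> v \<noteq> r x}"
          then obtain v where e: "e = {r x, v}" and v: "v \<in> component V E' x" and vn: "v \<noteq> r x" by auto
          have vV: "v \<in> V" and rv: "r v = r x" using v compc[OF x] by auto
          have vD: "v \<notin> D" using rv vn by (auto simp: r_def)
          hence "dom v = r x" using rv by (simp add: r_def)
          hence "e \<in> E'" using e vV vD unfolding E'_def by (auto intro!: image_eqI[where x=v])
          moreover have "e \<subseteq> component V E' x" using e v \<open>r x \<in> component V E' x\<close> by auto
          ultimately show "e \<in> induced_edges E' (component V E' x)" by (simp add: induced_edges_def)
        qed
      qed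
    qed
    have "constellation V E'"
      unfolding constellation_def forest_def components_def
    proof (intro conjI ballI)
      fix C assume "C \<in> component V E' ` V"
      then obtain x where x: "x \<in> V" and C: "C = component V E' x" by blast
      have fC: "finite C" using C comp_sub finV finite_subset by metis
      show "is_star C (induced_edges E' C)" unfolding is_star_def using star[OF x] C by blast
      show "card (induced_edges E' C) + 1 = card C"
        using star[OF x] C card_star[OF fC] by simp
    qed
    hence conE: "constellation V (E - F)" using EF by simp
    have i1: "int (card F) = int (card E) - int (card E')" using cF cE'le by simp
    have i2: "int (card E') = int (card V) - int k" using cE'2 cDV cD by simp
    have "F \<subseteq> E" by (simp add: F_def)
    moreover have "int (card F) = int (card E) - int (card V) + int k" using i1 i2 by linarith
    ultimately show "\<exists>F \<subseteq> E. int (card F) = int (card E) - int (card V) + int k \<and> constellation V (E - F)"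
      using conE by blast
  next
    assume "\<exists>F \<subseteq> E. int (card F) = int (card E) - int (card V) + int k \<and> constellation V (E - F)"
    then obtain F where FE: "F \<subseteq> E" and cF: "int (card F) = int (card E) - int (card V) + int k"
      and con: "constellation V (E - F)" by blast
    define E' where "E' = E - F"
    have cE': "card E' = card E - card F" unfolding E'_def using FE finE by (simp add: card_Diff_subset finite_subset)
    have cFE: "card F \<le> card E" using FE finE by (simp add: card_mono)
    let ?c = "component V E'"
    define cen where "cen C = (SOME c. c \<in> C \<and> induced_edges E' C = {{c,v}|v. v\<in>C \<and> v\<noteq>c})" for C
    have cen: "cen (?c v) \<in> ?c v \<and> induced_edges E' (?c v) = {{cen (?c v), w}|w. w \<in> ?c v \<and> w \<noteq> cen (?c v)}"
      if v: "v \<in> V" for v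
    proof -
      have "?c v \<in> components V E'" using v by (simp add: components_def)
      moreover have "\<forall>C\<in>components V E'. is_star C (induced_edges E' C)"
        using con unfolding constellation_def E'_def by blast
      ultimately have "is_star (?c v) (induced_edges E' (?c v))" by blast
      hence "\<exists>c. c \<in> ?c v \<and> induced_edges E' (?c v) = {{c,w}|w. w\<in>?c v \<and> w\<noteq>c}"
        unfolding is_star_def by blast
      thus ?thesis unfolding cen_def by (rule someI_ex)
    qed
    define D where "D = {v \<in> V. cen (?c v) = v}"
    define g where "g v = {cen (?c v), v}" for v
    have DV: "D \<subseteq> V" unfolding D_def by blast
    have cenD: "cen (?c v) \<in> D" if v: "v \<in> V" for v
    proof -
      have a: "cen (?c v) \<in> ?c v" using cen[OF v] by blast
      hence eq: "?c (cen (?c v)) = ?c v" using v by (rule comp_eq)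
      have "cen (?c (cen (?c v))) = cen (?c v)" by (simp only: eq)
      moreover have "cen (?c v) \<in> V" using a comp_sub[of V E' v] by blast
      ultimately show ?thesis unfolding D_def by blast
    qed
    have bij: "bij_betw g (V - D) E'"
      unfolding bij_betw_def
    proof (intro conjI)
      show "inj_on g (V - D)"
      proof (rule inj_onI)
        fix a b assume a: "a \<in> V - D" and b: "b \<in> V - D" and e: "g a = g b"
        show "a = b"
        proof (rule ccontr)
          assume ne: "a \<noteq> b"
          have "{cen (?c a), a} = {cen (?c b), b}" using e by (simp add: g_def)
          hence ab: "a = cen (?c b)" using ne by (auto simp: doubleton_eq_iff)
          moreover have "cen (?c b) \<in> D" using b by (intro cenD) simp
          ultimately show False using a by simp
        qed
      qed
      show "g ` (V - D) = E'"
      proof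
        show "g ` (V - D) \<subseteq> E'"
        proof
          fix e assume "e \<in> g ` (V - D)"
          then obtain v where v: "v \<in> V - D" and e: "e = g v" by blast
          have "v \<in> ?c v" using v by (simp add: comp_self)
          moreover have "v \<noteq> cen (?c v)" using v unfolding D_def by force
          ultimately have "e \<in> {{cen (?c v), w}|w. w \<in> ?c v \<and> w \<noteq> cen (?c v)}" unfolding e g_def by blast
          hence "e \<in> induced_edges E' (?c v)" using cen[of v] v by simp
          thus "e \<in> E'" by (simp add: induced_edges_def)
        qed
      next
        show "E' \<subseteq> g ` (V - D)"
        proof
          fix e assume eE': "e \<in> E'"
          then obtain u w where u: "u \<in> V" and w: "w \<in> V" and e: "e = {u,w}"
            using edges unfolding E'_def by blast
          have "w \<in> ?c u" using comp_edge[of u w E' V] eE' e w by simp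
          moreover have "u \<in> ?c u" using u by (simp add: comp_self)
          ultimately have "e \<in> induced_edges E' (?c u)" using e eE' by (simp add: induced_edges_def)
          hence "e \<in> {{cen (?c u), w}|w. w \<in> ?c u \<and> w \<noteq> cen (?c u)}" using cen[OF u] by simp
          then obtain x where ex: "e = {cen (?c u), x}" and x: "x \<in> ?c u" and xn: "x \<noteq> cen (?c u)"
            by blast
          have cx: "?c x = ?c u" using x u by (rule comp_eq)
          have xV: "x \<in> V" using x comp_sub[of V E' u] by blast
          have "x \<notin> D"
          proof
            assume "x \<in> D"
            hence "cen (?c x) = x" unfolding D_def by blast
            thus False using cx xn by simp
          qed
          moreover have "g x = e" using cx ex by (simp add: g_def)
          ultimately show "e \<in> g ` (V - D)" using xV by blast
        qed
      qed
    qed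
    have "card E' = card (V - D)" using bij by (simp add: bij_betw_same_card)
    also have "\<dots> = card V - card D" using DV finV by (simp add: card_Diff_subset finite_subset)
    finally have c1: "card E' = card V - card D" .
    have cDV: "card D \<le> card V" using DV finV by (simp add: card_mono)
    have j1: "int (card E') = int (card E) - int (card F)" using cE' cFE by simp
    have j2: "int (card E') = int (card V) - int (card D)" using c1 cDV by simp
    have "int (card D) = int k" using j1 j2 cF by linarith
    hence "card D = k" by simp
    moreover have "dominating_set V E D"
      unfolding dominating_set_def
    proof (intro conjI ballI)
      show "D \<subseteq> V" by (rule DV)
      fix v assume v: "v \<in> V - D"
      have "g v \<in> E'" using bij v by (auto simp: bij_betw_def)
      moreover have "{v, cen (?c v)} = g v" unfolding g_def by (rule insert_commute)
      ultimately have "{v, cen (?c v)} \<in> E" unfolding E'_def by simp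
      thus "\<exists>d \<in> D. {v, d} \<in> E" using cenD v by blast
    qed
    ultimately show "\<exists>D. dominating_set V E D \<and> card D = k" by blast
  qed
qed

end
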